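(* For each $n\ge2$ there exists a constant $\beta_n>0$, depending only on $n$, such that for every lattice $\Lambda\subset\mathbb R^n$ and every special basis $(u_1,\dots,u_n)$ of $\Lambda$, the flat torus $\mathbb R^n/\Lambda$ satisfies $\mathrm{diam}(\mathbb R^n/\Lambda)\ge\beta_n|u_1|$.
   Context: For nonzero $v$ and a nontrivial subspace $W\subset\mathbb R^n$, $\mathrm{ang}(v,W)$ is the minimum angle between $v$ and nonzero vectors of $W$. Let $\theta_n=\arcsin(2^{-n(n-1)/4})$. Say a $\mathbb Z$-basis $v_1,\dots,v_n$ of a lattice $\Lambda$ satisfies the angle condition if $\mathrm{ang}(v_i,\mathrm{span}_{\mathbb R}\{v_j:j\neq i\})\ge\theta_n$ for all $i$ (such bases always exist). Let $R_0(\Lambda)$ be the minimal $r>0$ such that the closed ball of radius $r$ centered at $0$ contains a $\mathbb Z$-basis of $\Lambda$ satisfying the angle condition. A special basis of $\Lambda$ is an ordered $\mathbb Z$-basis $(u_1,\dots,u_n)$ satisfying the angle condition, contained in that closed ball of radius $R_0(\Lambda)$, ordered so that $|u_1|\ge|u_2|\ge\dots\ge|u_n|$, and minimal among all such ordered bases for the lexicographic order of the tuples $(|u_1|,\dots,|u_n|)$. The diameter of $\mathbb R^n/\Lambda$ is with respect to the flat metric induced from Euclidean $\mathbb R^n$. *)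

theory Defs
  imports "HOL-Analysis.Analysis"
begin

text \<open>Vectors of R^n are elements of real^'n, with n = CARD('n).
  Ordered families of n vectors (u_1,...,u_n) are functions nat => real^'n,
  where u_{i+1} is u i for i < n (0-based indexing).\<close>

definition vec_angle :: "real^'n \<Rightarrow> real^'n \<Rightarrow> real" where
  "vec_angle v w = arccos ((v \<bullet> w) / (norm v * norm w))"

definition ang :: "real^'n \<Rightarrow> (real^'n) set \<Rightarrow> real" where
  "ang v W = Inf {vec_angle v w | w. w \<in> W \<and> w \<noteq> 0}"

definition theta :: "nat \<Rightarrow> real" where
  "theta n = arcsin (2 powr (- (real n * (real n - 1) / 4)))"

definition lattice_gen :: "(nat \<Rightarrow> real^'n) \<Rightarrow> (real^'n) set" where
  "lattice_gen b = {(\<Sum>i<CARD('n). of_int (k i) *\<^sub>R b i) | k :: nat \<Rightarrow> int. True}"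

definition lin_indep_fam :: "(nat \<Rightarrow> real^'n) \<Rightarrow> bool" where
  "lin_indep_fam b \<longleftrightarrow>
     (\<forall>c :: nat \<Rightarrow> real. (\<Sum>i<CARD('n). c i *\<^sub>R b i) = 0 \<longrightarrow> (\<forall>i<CARD('n). c i = 0))"

definition is_lattice :: "(real^'n) set \<Rightarrow> bool" where
  "is_lattice L \<longleftrightarrow> (\<exists>b. lin_indep_fam b \<and> L = lattice_gen b)"

definition is_Zbasis :: "(real^'n) set \<Rightarrow> (nat \<Rightarrow> real^'n) \<Rightarrow> bool" where
  "is_Zbasis L b \<longleftrightarrow> lin_indep_fam b \<and> lattice_gen b = L"

definition angle_cond :: "(nat \<Rightarrow> real^'n) \<Rightarrow> bool" where
  "angle_cond b \<longleftrightarrow>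
     (\<forall>i<CARD('n). ang (b i) (span (b ` ({..<CARD('n)} - {i}))) \<ge> theta CARD('n))"

definition R0 :: "(real^'n) set \<Rightarrow> real" where
  "R0 L = Inf {r. r > 0 \<and> (\<exists>b. is_Zbasis L b \<and> angle_cond b \<and>
                              (\<forall>i<CARD('n). norm (b i) \<le> r))}"

definition norms_list :: "(nat \<Rightarrow> real^'n) \<Rightarrow> real list" where
  "norms_list b = map (\<lambda>i. norm (b i)) [0..<CARD('n)]"

definition lex_le :: "real list \<Rightarrow> real list \<Rightarrow> bool" where
  "lex_le xs ys \<longleftrightarrow> xs = ys \<or> (xs, ys) \<in> lexord {(a, b). a < b}"

definition admissible_ordered :: "(real^'n) set \<Rightarrow> (nat \<Rightarrow> real^'n) \<Rightarrow> bool" where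
  "admissible_ordered L b \<longleftrightarrow> is_Zbasis L b \<and> angle_cond b \<and>
     (\<forall>i<CARD('n). norm (b i) \<le> R0 L) \<and>
     (\<forall>i j. i \<le> j \<longrightarrow> j < CARD('n) \<longrightarrow> norm (b j) \<le> norm (b i))"

definition special_basis :: "(real^'n) set \<Rightarrow> (nat \<Rightarrow> real^'n) \<Rightarrow> bool" where
  "special_basis L u \<longleftrightarrow> admissible_ordered L u \<and>
     (\<forall>v. admissible_ordered L v \<longrightarrow> lex_le (norms_list u) (norms_list v))"

definition torus_dist :: "(real^'n) set \<Rightarrow> real^'n \<Rightarrow> real^'n \<Rightarrow> real" where
  "torus_dist L x y = Inf {norm (x - y - l) | l. l \<in> L}"

definition torus_diam :: "(real^'n) set \<Rightarrow> real" where
  "torus_diam L = Sup {torus_dist L x y | x y. True}"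

end

theory Submission imports Defs begin

lemma key_ineq:
  fixes v w :: "real^'n"
  assumes C: "0 \<le> C" "C \<le> 1" and h: "(v \<bullet> w)\<^sup>2 \<le> C\<^sup>2 * (norm v)\<^sup>2 * (norm w)\<^sup>2"
  shows "(1 - C\<^sup>2) * (norm v)\<^sup>2 \<le> (norm (v - w))\<^sup>2"
proof -
  have e: "(norm (v - w))\<^sup>2 = (norm v)\<^sup>2 - 2 * (v \<bullet> w) + (norm w)\<^sup>2"
    by (simp add: power2_norm_eq_inner inner_diff algebra_simps inner_commute)
  have "\<bar>v \<bullet> w\<bar> \<le> C * norm v * norm w"
    using h C by (metis abs_le_square_iff abs_of_nonneg norm_ge_zero mult_nonneg_nonneg power_mult_distrib)
  moreover have "2 * (C * norm v * norm w) \<le> C\<^sup>2 * (norm v)\<^sup>2 + (norm w)\<^sup>2"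
    using sum_squares_bound[of "C * norm v" "norm w"] by (simp add: power_mult_distrib)
  ultimately show ?thesis unfolding e by (simp add: algebra_simps)
qed

lemma ang_elem:
  fixes v :: "real^'n"
  assumes "v \<noteq> 0" "w \<in> W" "w \<noteq> 0" "ang v W \<ge> t"
  shows "vec_angle v w \<ge> t"
proof -
  have bd: "bdd_below {vec_angle v w | w. w \<in> W \<and> w \<noteq> 0}"
  proof (rule bdd_belowI[where m=0], clarify)
    fix w :: "real^'n" assume "w \<noteq> 0"
    have "\<bar>v \<bullet> w\<bar> \<le> norm v * norm w" by (rule Cauchy_Schwarz_ineq2)
    hence q: "\<bar>(v \<bullet> w) / (norm v * norm w)\<bar> \<le> 1" using assms(1) \<open>w\<noteq>0\<close>
      by (simp add: abs_div divide_le_eq_1)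
    thus "0 \<le> vec_angle v w" unfolding vec_angle_def by (intro arccos_lbound; insert q; arith)
  qed
  have "ang v W \<le> vec_angle v w" unfolding ang_def
    by (rule cInf_lower[OF _ bd]) (use assms in auto)
  thus ?thesis using assms by simp
qed

lemma angle_bound:
  fixes v :: "real^'n"
  assumes v: "v \<noteq> 0" and W: "subspace W" and a: "ang v W \<ge> arcsin s"
    and s: "0 < s" "s \<le> 1" and w: "w \<in> W"
  shows "s * norm v \<le> norm (v - w)"
proof (cases "w = 0")
  case True thus ?thesis using s by (simp add: mult_left_le_one_le)
next
  case False
  define C where "C = cos (arcsin s)"
  have C: "C = sqrt (1 - s\<^sup>2)" unfolding C_def using s by (simp add: cos_arcsin)
  have s21: "s\<^sup>2 \<le> 1" using s mult_le_one[of s s] by (simp add: power2_eq_square)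
  have C0: "0 \<le> C" "C \<le> 1" using s s21 unfolding C by (auto simp: real_sqrt_le_1_iff)
  have CC: "C\<^sup>2 = 1 - s\<^sup>2" proof -
    have "s\<^sup>2 \<le> 1" using s mult_le_one[of s s] by (simp add: power2_eq_square)
    thus ?thesis unfolding C by simp
  qed
  have as: "0 \<le> arcsin s" "arcsin s \<le> pi" using s arcsin_le_arcsin[of 0 s] arcsin_bounded[of s] by auto
  have bnd: "c \<le> C" if "vec_angle v u \<ge> arcsin s" "c = (v \<bullet> u) / (norm v * norm u)" "u \<noteq> 0" for u c
  proof -
    have "\<bar>v \<bullet> u\<bar> \<le> norm v * norm u" by (rule Cauchy_Schwarz_ineq2)
    hence c1: "\<bar>c\<bar> \<le> 1" using v \<open>u\<noteq>0\<close> that(2) by (simp add: abs_div divide_le_eq_1)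
    have "cos (arccos c) \<le> cos (arcsin s)"
      using cos_monotone_0_pi_le[OF as(1) _ arccos_ubound[of c]] that(1)[unfolded vec_angle_def, folded that(2)] c1 by auto
    thus ?thesis using c1 by (simp add: cos_arccos C_def)
  qed
  have mw: "- w \<in> W" "- w \<noteq> 0" using W w False by (auto simp: subspace_neg)
  have c1: "(v \<bullet> w) / (norm v * norm w) \<le> C"
    by (rule bnd[OF ang_elem[OF v w False a]]) (use False in auto)
  have c2: "- ((v \<bullet> w) / (norm v * norm w)) \<le> C"
    by (rule bnd[OF ang_elem[OF v mw a]]) (use False in auto)
  have "\<bar>(v \<bullet> w) / (norm v * norm w)\<bar> \<le> C" using c1 c2 by linarith
  hence "\<bar>v \<bullet> w\<bar> \<le> C * (norm v * norm w)" using v False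
    by (simp add: abs_div divide_le_eq)
  hence "(v \<bullet> w)\<^sup>2 \<le> (C * (norm v * norm w))\<^sup>2"
    by (metis abs_le_square_iff abs_of_nonneg C0(1) norm_ge_zero mult_nonneg_nonneg)
  hence "(v \<bullet> w)\<^sup>2 \<le> C\<^sup>2 * (norm v)\<^sup>2 * (norm w)\<^sup>2" by (simp add: power_mult_distrib mult.assoc)
  from key_ineq[OF C0 this] have "(s * norm v)\<^sup>2 \<le> (norm (v - w))\<^sup>2"
    by (simp add: CC power_mult_distrib)
  thus ?thesis using s by (simp add: power2_le_iff_abs_le)
qed


lemma basis_inj:
  fixes b :: "nat \<Rightarrow> real^'n"
  assumes "lin_indep_fam b"
  shows "inj_on b {..<CARD('n)}"
proof (rule inj_onI, rule ccontr)
  fix i j assume ij: "i \<in> {..<CARD('n)}" "j \<in> {..<CARD('n)}" "b i = b j" "i \<noteq> j"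
  define c where "c = (\<lambda>k. if k = i then 1 else if k = j then -1 else (0::real))"
  have eq: "\<And>k. c k *\<^sub>R b k = (if k = i then b k else 0) - (if k = j then b k else 0)"
    using ij unfolding c_def by auto
  have "(\<Sum>k<CARD('n). c k *\<^sub>R b k) = (\<Sum>k<CARD('n). (if k = i then b k else 0)) - (\<Sum>k<CARD('n). (if k = j then b k else 0))"
    by (simp only: eq sum_subtractf)
  hence "(\<Sum>k<CARD('n). c k *\<^sub>R b k) = 0"
    using ij by simp
  hence "c i = 0" using assms ij unfolding lin_indep_fam_def by blast
  thus False unfolding c_def by simp
qed

lemma basis_span:
  fixes b :: "nat \<Rightarrow> real^'n"
  assumes li: "lin_indep_fam b"
  shows "span (b ` {..<CARD('n)}) = UNIV"
proof -
  have inj: "inj_on b {..<CARD('n)}" by (rule basis_inj[OF li])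
  have ind: "independent (b ` {..<CARD('n)})"
  proof
    assume "dependent (b ` {..<CARD('n)})"
    then obtain a where a: "\<exists>v\<in>b ` {..<CARD('n)}. a v \<noteq> 0"
      "(\<Sum>v\<in>b ` {..<CARD('n)}. a v *\<^sub>R v) = 0"
      by (subst (asm) dependent_finite) auto
    have "(\<Sum>i<CARD('n). a (b i) *\<^sub>R b i) = 0" using a(2) by (simp add: sum.reindex[OF inj])
    hence "\<forall>i<CARD('n). (\<lambda>i. a (b i)) i = 0" using li unfolding lin_indep_fam_def
      by (elim allE[of _ "\<lambda>i. a (b i)"]) simp
    thus False using a(1) by auto
  qed
  have "UNIV \<subseteq> span (b ` {..<CARD('n)})"
    by (rule card_ge_dim_independent[OF _ ind]) (simp_all add: card_image[OF inj])
  thus ?thesis by auto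
qed

lemma basis_repr:
  fixes b :: "nat \<Rightarrow> real^'n"
  assumes li: "lin_indep_fam b"
  shows "\<exists>c. x = (\<Sum>i<CARD('n). c i *\<^sub>R b i)"
proof -
  have inj: "inj_on b {..<CARD('n)}" by (rule basis_inj[OF li])
  have "x \<in> span (b ` {..<CARD('n)})" using basis_span[OF li] by simp
  then obtain a where "x = (\<Sum>v\<in>b ` {..<CARD('n)}. a v *\<^sub>R v)"
    by (auto simp: span_finite)
  hence "x = (\<Sum>i<CARD('n). a (b i) *\<^sub>R b i)" by (simp add: sum.reindex[OF inj])
  thus ?thesis by (rule exI[where x="\<lambda>i. a (b i)"])
qed

lemma torus_dist_upper:
  fixes b :: "nat \<Rightarrow> real^'n"
  assumes li: "lin_indep_fam b"
  shows "torus_dist (lattice_gen b) x y \<le> (\<Sum>i<CARD('n). norm (b i))"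
proof -
  obtain c where c: "x - y = (\<Sum>i<CARD('n). c i *\<^sub>R b i)" using basis_repr[OF li] by blast
  define l where "l = (\<Sum>i<CARD('n). of_int (floor (c i)) *\<^sub>R b i)"
  have l: "l \<in> lattice_gen b" unfolding l_def lattice_gen_def
    by (rule CollectI, rule exI[where x="\<lambda>i. floor (c i)"]) simp
  have "x - y - l = (\<Sum>i<CARD('n). (c i - of_int (floor (c i))) *\<^sub>R b i)"
    unfolding c l_def by (simp add: sum_subtractf scaleR_diff_left)
  hence "norm (x - y - l) \<le> (\<Sum>i<CARD('n). norm ((c i - of_int (floor (c i))) *\<^sub>R b i))"
    by (metis norm_sum)
  also have "\<dots> \<le> (\<Sum>i<CARD('n). norm (b i))"
  proof (rule sum_mono)
    fix i
    have "0 \<le> c i - of_int (floor (c i))" "c i - of_int (floor (c i)) \<le> 1"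
      by linarith+
    thus "norm ((c i - of_int (floor (c i))) *\<^sub>R b i) \<le> norm (b i)"
      by (simp add: mult_left_le_one_le)
  qed
  finally have le: "norm (x - y - l) \<le> (\<Sum>i<CARD('n). norm (b i))" .
  have bb: "bdd_below {norm (x - y - l) | l. l \<in> lattice_gen b}"
    by (rule bdd_belowI[where m=0]) auto
  have "torus_dist (lattice_gen b) x y \<le> norm (x - y - l)" unfolding torus_dist_def
    by (rule cInf_lower[OF _ bb]) (use l in blast)
  with le show ?thesis by linarith
qed

lemma half_int: "\<bar>1/2 - real_of_int k\<bar> \<ge> 1/2"
proof (cases "k \<le> 0")
  case True hence "real_of_int k \<le> 0" by simp
  thus ?thesis by linarith
next
  case False hence "real_of_int k \<ge> 1" by simp
  thus ?thesis by linarith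
qed

lemma s_bounds: "0 < (2::real) powr (- (real n * (real n - 1) / 4))"
  "(2::real) powr (- (real n * (real n - 1) / 4)) \<le> 1"
proof -
  show "0 < (2::real) powr (- (real n * (real n - 1) / 4))" by simp
  have e: "0 \<le> real n * (real n - 1) / 4"
    by (cases n) auto
  have "1 \<le> (2::real) powr (real n * (real n - 1) / 4)" by (rule ge_one_powr_ge_zero[OF _ e]) simp
  thus "(2::real) powr (- (real n * (real n - 1) / 4)) \<le> 1" using le_imp_inverse_le[of 1 "(2::real) powr (real n * (real n - 1) / 4)"] by (simp add: powr_minus)
qed

lemma torus_dist_lower:
  fixes u :: "nat \<Rightarrow> real^'n"
  assumes li: "lin_indep_fam u" and ac: "angle_cond u"
  defines "s \<equiv> (2::real) powr (- (real CARD('n) * (real CARD('n) - 1) / 4))"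
  shows "s / 2 * norm (u 0) \<le> torus_dist (lattice_gen u) ((1/2) *\<^sub>R u 0) 0"
proof -
  let ?n = "CARD('n)"
  let ?W = "span (u ` ({..<?n} - {0}))"
  have n0: "0 \<in> {..<?n}" by simp
  have u0: "u 0 \<noteq> 0"
  proof
    assume z: "u 0 = 0"
    have pw: "\<And>i. (if i = 0 then 1 else (0::real)) *\<^sub>R u i = (if i = 0 then u i else 0)" by simp
    have "(\<Sum>i<?n. (if i = 0 then 1 else (0::real)) *\<^sub>R u i) = 0" using z
      by (simp only: pw) simp
    moreover have "(\<Sum>i<?n. (if i = 0 then 1 else (0::real)) *\<^sub>R u i) = 0 \<longrightarrow> (\<forall>i<?n. (if i = 0 then 1 else (0::real)) = 0)"
      using li unfolding lin_indep_fam_def by (rule spec[where x="\<lambda>i. if i = 0 then 1 else (0::real)"])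
    ultimately have "\<forall>i<?n. (if i = 0 then 1 else (0::real)) = 0" by blast
    hence "(if (0::nat) = 0 then 1 else (0::real)) = 0" using n0 by blast
    thus False by simp
  qed
  have sb: "0 < s" "s \<le> 1" unfolding s_def using s_bounds by auto
  have a: "ang (u 0) ?W \<ge> arcsin s"
    using ac n0 unfolding angle_cond_def theta_def s_def by blast
  have ne: "{norm ((1/2) *\<^sub>R u 0 - 0 - l) | l. l \<in> lattice_gen u} \<noteq> {}"
    unfolding lattice_gen_def by blast
  show ?thesis unfolding torus_dist_def
  proof (rule cInf_greatest[OF ne], clarify)
    fix l assume "l \<in> lattice_gen u"
    then obtain k where l: "l = (\<Sum>i<?n. of_int (k i) *\<^sub>R u i)" unfolding lattice_gen_def by blast
    define w where "w = (\<Sum>i\<in>{..<?n} - {0}. of_int (k i) *\<^sub>R u i)"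
    have wW: "w \<in> ?W" unfolding w_def
      by (intro span_sum span_scale span_base) auto
    have l2: "l = of_int (k 0) *\<^sub>R u 0 + w" unfolding l w_def
      by (simp add: sum.remove[OF _ n0])
    define c where "c = 1/2 - real_of_int (k 0)"
    have c: "\<bar>c\<bar> \<ge> 1/2" unfolding c_def by (rule half_int)
    hence c0: "c \<noteq> 0" by auto
    have "(1/2) *\<^sub>R u 0 - 0 - l = c *\<^sub>R (u 0 - (1/c) *\<^sub>R w)"
      unfolding l2 c_def using c0[unfolded c_def] by (simp add: algebra_simps)
    hence eq: "norm ((1/2) *\<^sub>R u 0 - 0 - l) = \<bar>c\<bar> * norm (u 0 - (1/c) *\<^sub>R w)" by simp
    have w': "(1/c) *\<^sub>R w \<in> ?W" using wW by (rule span_scale)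
    have "s * norm (u 0) \<le> norm (u 0 - (1/c) *\<^sub>R w)"
      by (rule angle_bound[OF u0 subspace_span a sb w'])
    hence "1/2 * (s * norm (u 0)) \<le> \<bar>c\<bar> * norm (u 0 - (1/c) *\<^sub>R w)"
      using c by (intro mult_mono) (auto intro: mult_nonneg_nonneg simp: less_imp_le[OF sb(1)])
    thus "s / 2 * norm (u 0) \<le> norm ((1/2) *\<^sub>R u 0 - 0 - l)" unfolding eq by simp
  qed
qed

theorem mainTheorem17:
  assumes "CARD('n) \<ge> 2"
  shows "\<exists>\<beta>>0. \<forall>(L :: (real^'n) set) u.
           is_lattice L \<and> special_basis L u \<longrightarrow> torus_diam L \<ge> \<beta> * norm (u 0)"
proof (intro exI conjI allI impI)
  define s where "s = (2::real) powr (- (real CARD('n) * (real CARD('n) - 1) / 4))"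
  show "0 < s / 2" unfolding s_def by simp
  fix L :: "(real^'n) set" and u
  assume "is_lattice L \<and> special_basis L u"
  hence li: "lin_indep_fam u" and L: "L = lattice_gen u" and ac: "angle_cond u"
    unfolding special_basis_def admissible_ordered_def is_Zbasis_def by auto
  have bd: "bdd_above {torus_dist L x y | x y. True}"
    unfolding L by (rule bdd_aboveI[where M="\<Sum>i<CARD('n). norm (u i)"]) (auto intro: torus_dist_upper[OF li])
  have "s / 2 * norm (u 0) \<le> torus_dist L ((1/2) *\<^sub>R u 0) 0"
    unfolding L s_def by (rule torus_dist_lower[OF li ac])
  also have "\<dots> \<le> torus_diam L" unfolding torus_diam_def
    by (rule cSup_upper[OF _ bd]) blast
  finally show "s / 2 * norm (u 0) \<le> torus_diam L" .
qed

end
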